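(* Let $L$ be an infinite set and let $Q$ be either the edgeless cube $Q_L$ or the edged cube $\bar Q_L$. If $s$ is a universally convergent basic sequence and $f$ is the terminal labelling obtained by applying $s$ to the identity labelling of $Q$, then $f:Q\to Q$ is a bijection, and $f(C)=C$ for every cluster $C$.
   Context: Let $L$ be an infinite set, $-L=\{-r:r\in L\}$ a disjoint copy of $L$, and $0$ a new element; $L^\dagger=-L\cup\{0\}\cup L$ with $-(-r)=r$, $-0=0$. Adjoin $\pm\infty$ with $-(+\infty)=-\infty$ and set $\bar L^\dagger=L^\dagger\cup\{\pm\infty\}$. Points of $U=(\bar L^\dagger)^3$ have coordinates $x,y,z$. The edgeless cube $Q_L$ is the set of points of $U$ with exactly one coordinate in $\{\pm\infty\}$ (cells). The edged cube $\bar Q_L$ is the set of cells $(p,i)$ with $p\in U$, $i\in\{x,y,z\}$, $p_i\in\{\pm\infty\}$ ($i$ marks the face). For $i\in\{x,y,z\}$, $\alpha\in\bar L^\dagger$, the quarter-turn twist $T_{i,\alpha}$ is the permutation of cells fixing every cell whose point $p$ has $p_i\ne\alpha$ and acting on the others by $T_{x,\alpha}(\alpha,y,z)=(\alpha,-z,y)$, $T_{y,\alpha}(x,\alpha,z)=(z,\alpha,-x)$, $T_{z,\alpha}(x,y,\alpha)=(-y,x,\alpha)$ (in $\bar Q_L$ the marked coordinate is carried along by the rotation). Basic twists are $T,T^2,T^3$ for quarter-turn twists $T$. A basic sequence is a sequence $\langle\sigma_\eta:\eta<\theta\rangle$ of basic twists of ordinal length $\theta$. A labelling is a map $f$ from cells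 to $X\cup\{\mathrm{NaC}\}$ for a set $X\not\ni\mathrm{NaC}$; it is legal if it never takes value NaC. A twist $\sigma$ acts by $(\sigma f)(c)=f(\sigma^{-1}c)$. Applying $\langle\sigma_\eta:\eta<\theta\rangle$ to $f_0$ produces $f_{\eta+1}=\sigma_\eta f_\eta$, and for limit $\lambda\le\theta$, $f_\lambda(c)$ is the eventually constant value of $f_\eta(c)$ ($\eta<\lambda$) if it exists and NaC otherwise; $f_\theta$ is the terminal labelling. The identity labelling labels each cell by itself (values in the set of cells); a basic sequence is universally convergent if its terminal labelling from the identity labelling is legal. The cluster of a cell is its orbit under the group generated by all quarter-turn twists. *)

theory Defs
  imports Main
begin

text \<open>Elements of the extended set: Pos r = r, Neg r = -r, Zero = 0, PInf/NInf = +inf/-inf.\<close>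
datatype 'l crd = Pos 'l | Neg 'l | Zero | PInf | NInf

fun cneg :: "'l crd \<Rightarrow> 'l crd" where
  "cneg (Pos r) = Neg r" | "cneg (Neg r) = Pos r" | "cneg Zero = Zero"
| "cneg PInf = NInf" | "cneg NInf = PInf"

definition is_inf :: "'l crd \<Rightarrow> bool" where
  "is_inf a \<longleftrightarrow> a = PInf \<or> a = NInf"

datatype axis = AX | AY | AZ

type_synonym 'l point = "'l crd \<times> 'l crd \<times> 'l crd"

fun coord :: "axis \<Rightarrow> 'l point \<Rightarrow> 'l crd" where
  "coord AX (x,y,z) = x" | "coord AY (x,y,z) = y" | "coord AZ (x,y,z) = z"

fun rot :: "axis \<Rightarrow> 'l point \<Rightarrow> 'l point" where
  "rot AX (x,y,z) = (x, cneg z, y)"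
| "rot AY (x,y,z) = (z, y, cneg x)"
| "rot AZ (x,y,z) = (cneg y, x, z)"

text \<open>Where the rotation about axis i carries the coordinate axis j.\<close>
fun rotax :: "axis \<Rightarrow> axis \<Rightarrow> axis" where
  "rotax AX AX = AX" | "rotax AX AY = AZ" | "rotax AX AZ = AY"
| "rotax AY AY = AY" | "rotax AY AZ = AX" | "rotax AY AX = AZ"
| "rotax AZ AZ = AZ" | "rotax AZ AX = AY" | "rotax AZ AY = AX"

text \<open>Quarter-turn twist T_{i,alpha} on points (edgeless cube) and on marked cells (edged cube).\<close>
definition twist_pt :: "axis \<times> 'l crd \<Rightarrow> 'l point \<Rightarrow> 'l point" where
  "twist_pt t p = (if coord (fst t) p = snd t then rot (fst t) p else p)"

definition twist_ed :: "axis \<times> 'l crd \<Rightarrow> 'l point \<times> axis \<Rightarrow> 'l point \<times> axis" where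
  "twist_ed t c = (if coord (fst t) (fst c) = snd t
                   then (rot (fst t) (fst c), rotax (fst t) (snd c)) else c)"

definition Q_edgeless :: "'l point set" where
  "Q_edgeless = {p. card {i. is_inf (coord i p)} = 1}"

definition Q_edged :: "('l point \<times> axis) set" where
  "Q_edged = {(p,i). is_inf (coord i p)}"

text \<open>A basic twist T^k (k in {1,2,3}) is represented by (quarter-turn data, k).\<close>
type_synonym 'l basic_twist = "(axis \<times> 'l crd) \<times> nat"

definition bapply :: "('q \<Rightarrow> 'c \<Rightarrow> 'c) \<Rightarrow> ('q \<times> nat) \<Rightarrow> 'c \<Rightarrow> 'c" where
  "bapply tw s = (tw (fst s)) ^^ (snd s)"

text \<open>Inverse of T^k is T^(4-k) (T has order dividing 4).\<close>
definition binv :: "('q \<Rightarrow> 'c \<Rightarrow> 'c) \<Rightarrow> ('q \<times> nat) \<Rightarrow> 'c \<Rightarrow> 'c" where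
  "binv tw s = (tw (fst s)) ^^ (4 - snd s)"

text \<open>A basic sequence of ordinal length theta: indices eta < theta in a well-order.\<close>
definition basic_seq :: "('o::wellorder \<Rightarrow> 'q \<times> nat) \<Rightarrow> 'o \<Rightarrow> bool" where
  "basic_seq \<sigma> \<theta> \<longleftrightarrow> (\<forall>\<eta><\<theta>. snd (\<sigma> \<eta>) \<in> {1,2,3})"

text \<open>Labellings: None plays the role of NaC. Action: (sigma f)(c) = f(sigma^-1 c).\<close>
definition act :: "('q \<Rightarrow> 'c \<Rightarrow> 'c) \<Rightarrow> ('q \<times> nat) \<Rightarrow> ('c \<Rightarrow> 'x option) \<Rightarrow> 'c \<Rightarrow> 'x option" where
  "act tw s f c = f (binv tw s c)"

definition run_step ::
  "('q \<Rightarrow> 'c \<Rightarrow> 'c) \<Rightarrow> ('o::wellorder \<Rightarrow> 'q \<times> nat) \<Rightarrow> ('c \<Rightarrow> 'x option)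
   \<Rightarrow> ('o \<Rightarrow> 'c \<Rightarrow> 'x option) \<Rightarrow> 'o \<Rightarrow> 'c \<Rightarrow> 'x option" where
  "run_step tw \<sigma> f0 R \<eta> =
    (if \<not> (\<exists>\<xi>. \<xi> < \<eta>) then f0
     else if (\<exists>\<xi><\<eta>. \<forall>\<zeta><\<eta>. \<zeta> \<le> \<xi>)
       then (let \<xi> = (THE \<xi>. \<xi> < \<eta> \<and> (\<forall>\<zeta><\<eta>. \<zeta> \<le> \<xi>)) in act tw (\<sigma> \<xi>) (R \<xi>))
     else (\<lambda>c. if (\<exists>\<xi><\<eta>. \<forall>\<zeta>. \<xi> \<le> \<zeta> \<and> \<zeta> < \<eta> \<longrightarrow> R \<zeta> c = R \<xi> c)
               then (THE v. \<exists>\<xi><\<eta>. \<forall>\<zeta>. \<xi> \<le> \<zeta> \<and> \<zeta> < \<eta> \<longrightarrow> R \<zeta> c = v)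
               else None))"

definition run ::
  "('q \<Rightarrow> 'c \<Rightarrow> 'c) \<Rightarrow> ('o::wellorder \<Rightarrow> 'q \<times> nat) \<Rightarrow> ('c \<Rightarrow> 'x option) \<Rightarrow> 'o \<Rightarrow> 'c \<Rightarrow> 'x option" where
  "run tw \<sigma> f0 = wfrec {(a,b). a < b} (run_step tw \<sigma> f0)"

definition terminal_id :: "('q \<Rightarrow> 'c \<Rightarrow> 'c) \<Rightarrow> ('o::wellorder \<Rightarrow> 'q \<times> nat) \<Rightarrow> 'o \<Rightarrow> 'c \<Rightarrow> 'c option" where
  "terminal_id tw \<sigma> \<theta> = run tw \<sigma> Some \<theta>"

definition univ_convergent :: "'c set \<Rightarrow> ('q \<Rightarrow> 'c \<Rightarrow> 'c) \<Rightarrow> ('o::wellorder \<Rightarrow> 'q \<times> nat) \<Rightarrow> 'o \<Rightarrow> bool" where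
  "univ_convergent Q tw \<sigma> \<theta> \<longleftrightarrow> (\<forall>c\<in>Q. terminal_id tw \<sigma> \<theta> c \<noteq> None)"

text \<open>Cluster: orbit under the group generated by all quarter-turn twists
  (closed under each twist and its inverse T^3).\<close>
inductive_set cluster :: "('q \<Rightarrow> 'c \<Rightarrow> 'c) \<Rightarrow> 'c \<Rightarrow> 'c set" for tw c where
  base: "c \<in> cluster tw c"
| fwd: "d \<in> cluster tw c \<Longrightarrow> tw t d \<in> cluster tw c"
| bwd: "d \<in> cluster tw c \<Longrightarrow> (tw t ^^ 3) d \<in> cluster tw c"

definition conclusion :: "'c set \<Rightarrow> ('q \<Rightarrow> 'c \<Rightarrow> 'c) \<Rightarrow> ('o::wellorder \<Rightarrow> 'q \<times> nat) \<Rightarrow> 'o \<Rightarrow> bool" where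
  "conclusion Q tw \<sigma> \<theta> \<longleftrightarrow>
     (let f = (\<lambda>c. the (terminal_id tw \<sigma> \<theta> c)) in
      bij_betw f Q Q \<and> (\<forall>c\<in>Q. f ` cluster tw c = cluster tw c))"

end

theory Submission
  imports Defs
begin

definition good :: "('q \<Rightarrow> 'c \<Rightarrow> 'c) \<Rightarrow> ('c \<Rightarrow> 'c option) \<Rightarrow> bool" where
  "good tw g \<longleftrightarrow> (\<forall>c v. g c = Some v \<longrightarrow> v \<in> cluster tw c)
     \<and> (\<forall>c d v. g c = Some v \<longrightarrow> g d = Some v \<longrightarrow> c = d)"

lemma cluster_trans:
  assumes "e \<in> cluster tw d" "d \<in> cluster tw c"
  shows "e \<in> cluster tw c"
  using assms by (induction rule: cluster.induct) (auto intro: cluster.intros)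

lemma funpow_in_cluster: "(tw t ^^ n) c \<in> cluster tw c"
  by (induction n) (auto intro: cluster.intros)

lemma act_good:
  assumes g: "good tw g" and inj: "inj (tw (fst s))"
  shows "good tw (act tw s g)"
proof -
  let ?h = "tw (fst s) ^^ (4 - snd s)"
  have ih: "inj ?h" using inj by simp
  have a: "act tw s g c = g (?h c)" for c by (simp add: act_def binv_def)
  show ?thesis unfolding good_def a
  proof (intro conjI allI impI)
    fix c v assume "g (?h c) = Some v"
    then have "v \<in> cluster tw (?h c)" using g unfolding good_def by blast
    then show "v \<in> cluster tw c" using cluster_trans funpow_in_cluster by metis
  next
    fix c d v assume "g (?h c) = Some v" "g (?h d) = Some v"
    then have "?h c = ?h d" using g unfolding good_def by blast
    then show "c = d" using ih by (simp add: inj_eq)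
  qed
qed

lemma run_good:
  fixes \<sigma> :: "'o::wellorder \<Rightarrow> 'q \<times> nat"
  assumes inj: "\<And>t. inj (tw t)"
  shows "good tw (run tw \<sigma> Some \<eta>)"
proof (induction \<eta> rule: less_induct)
  case (less \<eta>)
  define R where "R = cut (run tw \<sigma> Some) {(a,b). a<b} \<eta>"
  have R: "\<And>\<xi>. \<xi><\<eta> \<Longrightarrow> R \<xi> = run tw \<sigma> Some \<xi>" by (simp add: R_def cut_def)
  have Rg: "\<And>\<xi>. \<xi><\<eta> \<Longrightarrow> good tw (R \<xi>)" using R less by simp
  have unf: "run tw \<sigma> Some \<eta> = run_step tw \<sigma> Some R \<eta>"
    unfolding run_def R_def by (rule wfrec[OF wf])
  show ?case
  proof (cases "\<exists>\<xi>. \<xi><\<eta>")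
    case False then show ?thesis unfolding unf run_step_def good_def
      by (auto intro: cluster.base)
  next
    case ex: True
    show ?thesis
    proof (cases "\<exists>\<xi><\<eta>. \<forall>\<zeta><\<eta>. \<zeta> \<le> \<xi>")
      case True
      then have ex1: "\<exists>!\<xi>. \<xi><\<eta> \<and> (\<forall>\<zeta><\<eta>. \<zeta> \<le> \<xi>)" by (meson antisym)
      define \<xi> where "\<xi> = (THE \<xi>. \<xi><\<eta> \<and> (\<forall>\<zeta><\<eta>. \<zeta> \<le> \<xi>))"
      have "\<xi> < \<eta>" using theI'[OF ex1] \<xi>_def by auto
      have "run tw \<sigma> Some \<eta> = act tw (\<sigma> \<xi>) (R \<xi>)"
        unfolding unf run_step_def using True ex by (simp add: \<xi>_def Let_def)
      then show ?thesis using act_good[OF Rg[OF \<open>\<xi> < \<eta>\<close>] inj] by simp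
    next
      case False
      let ?L = "run tw \<sigma> Some \<eta>"
      have L: "\<exists>\<xi><\<eta>. \<forall>\<zeta>. \<xi> \<le> \<zeta> \<and> \<zeta> < \<eta> \<longrightarrow> R \<zeta> c = Some v"
        if h: "?L c = Some v" for c v
      proof -
        have e: "?L c = (if (\<exists>\<xi><\<eta>. \<forall>\<zeta>. \<xi> \<le> \<zeta> \<and> \<zeta> < \<eta> \<longrightarrow> R \<zeta> c = R \<xi> c)
             then (THE v. \<exists>\<xi><\<eta>. \<forall>\<zeta>. \<xi> \<le> \<zeta> \<and> \<zeta> < \<eta> \<longrightarrow> R \<zeta> c = v) else None)"
        proof -
          have c1: "(\<not> (\<exists>\<xi>. \<xi><\<eta>)) = False" using ex by simp
          have c2: "(\<exists>\<xi><\<eta>. \<forall>\<zeta><\<eta>. \<zeta> \<le> \<xi>) = False" using False by simp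
          show ?thesis unfolding unf run_step_def c1 c2 if_False by (rule refl)
        qed
        have cnd: "\<exists>\<xi><\<eta>. \<forall>\<zeta>. \<xi> \<le> \<zeta> \<and> \<zeta> < \<eta> \<longrightarrow> R \<zeta> c = R \<xi> c"
        proof (rule ccontr)
          assume "\<not> (\<exists>\<xi><\<eta>. \<forall>\<zeta>. \<xi> \<le> \<zeta> \<and> \<zeta> < \<eta> \<longrightarrow> R \<zeta> c = R \<xi> c)"
          then have "?L c = None" unfolding e by (rule if_not_P)
          then show False using h by simp
        qed
        then obtain \<xi>0 where \<xi>0: "\<xi>0<\<eta>" "\<forall>\<zeta>. \<xi>0 \<le> \<zeta> \<and> \<zeta> < \<eta> \<longrightarrow> R \<zeta> c = R \<xi>0 c"
          by blast
        have the: "(THE v. \<exists>\<xi><\<eta>. \<forall>\<zeta>. \<xi> \<le> \<zeta> \<and> \<zeta> < \<eta> \<longrightarrow> R \<zeta> c = v) = R \<xi>0 c"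
        proof (rule the_equality)
          show "\<exists>\<xi><\<eta>. \<forall>\<zeta>. \<xi> \<le> \<zeta> \<and> \<zeta> < \<eta> \<longrightarrow> R \<zeta> c = R \<xi>0 c" using \<xi>0 by blast
          fix w assume "\<exists>\<xi><\<eta>. \<forall>\<zeta>. \<xi> \<le> \<zeta> \<and> \<zeta> < \<eta> \<longrightarrow> R \<zeta> c = w"
          then obtain \<xi>1 where \<xi>1: "\<xi>1<\<eta>" "\<forall>\<zeta>. \<xi>1 \<le> \<zeta> \<and> \<zeta> < \<eta> \<longrightarrow> R \<zeta> c = w" by blast
          have m: "\<xi>0 \<le> max \<xi>0 \<xi>1" "\<xi>1 \<le> max \<xi>0 \<xi>1" "max \<xi>0 \<xi>1 < \<eta>"
            using \<xi>0(1) \<xi>1(1) by (auto simp: max_def)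
          have "R (max \<xi>0 \<xi>1) c = w" using \<xi>1(2) m by blast
          moreover have "R (max \<xi>0 \<xi>1) c = R \<xi>0 c" using \<xi>0(2) m by blast
          ultimately show "w = R \<xi>0 c" by simp
        qed
        have "?L c = R \<xi>0 c" unfolding e if_P[OF cnd] the by (rule refl)
        then have "R \<xi>0 c = Some v" using h by simp
        then show ?thesis using \<xi>0 by metis
      qed
      show ?thesis unfolding good_def
      proof (intro conjI allI impI)
        fix c v assume "?L c = Some v"
        from L[OF this] obtain \<xi> where "\<xi><\<eta>" "\<forall>\<zeta>. \<xi> \<le> \<zeta> \<and> \<zeta> < \<eta> \<longrightarrow> R \<zeta> c = Some v" by blast
        then have "R \<xi> c = Some v" by auto
        then show "v \<in> cluster tw c" using Rg[OF \<open>\<xi><\<eta>\<close>] unfolding good_def by blast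
      next
        fix c d v assume a: "?L c = Some v" "?L d = Some v"
        from L[OF a(1)] obtain \<xi>1 where 1: "\<xi>1<\<eta>" "\<forall>\<zeta>. \<xi>1 \<le> \<zeta> \<and> \<zeta> < \<eta> \<longrightarrow> R \<zeta> c = Some v" by blast
        from L[OF a(2)] obtain \<xi>2 where 2: "\<xi>2<\<eta>" "\<forall>\<zeta>. \<xi>2 \<le> \<zeta> \<and> \<zeta> < \<eta> \<longrightarrow> R \<zeta> d = Some v" by blast
        have m: "max \<xi>1 \<xi>2 < \<eta>" "\<xi>1 \<le> max \<xi>1 \<xi>2" "\<xi>2 \<le> max \<xi>1 \<xi>2"
          using 1(1) 2(1) by (auto simp: max_def)
        have "R (max \<xi>1 \<xi>2) c = Some v" "R (max \<xi>1 \<xi>2) d = Some v" using 1(2) 2(2) m by blast+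
        then show "c = d" using Rg[OF m(1)] unfolding good_def by blast
      qed
    qed
  qed
qed

lemma generic:
  assumes inj: "\<And>t. inj (tw t)"
   and fin: "\<And>c. c \<in> Q \<Longrightarrow> finite (cluster tw c)"
   and clQ: "\<And>c. c \<in> Q \<Longrightarrow> cluster tw c \<subseteq> Q"
   and uc: "univ_convergent Q tw \<sigma> \<theta>"
  shows "conclusion Q tw \<sigma> \<theta>"
proof -
  let ?g = "terminal_id tw \<sigma> \<theta>"
  define f where "f = (\<lambda>c. the (?g c))"
  have good: "good tw ?g" unfolding terminal_id_def by (rule run_good[OF inj])
  have g1: "\<And>c v. ?g c = Some v \<Longrightarrow> v \<in> cluster tw c"
    using good unfolding good_def by blast
  have g2: "\<And>c d v. ?g c = Some v \<Longrightarrow> ?g d = Some v \<Longrightarrow> c = d"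
    using good unfolding good_def by blast
  have some: "?g c = Some (f c)" if "c\<in>Q" for c
  proof -
    have "?g c \<noteq> None" using uc that unfolding univ_convergent_def by blast
    then show ?thesis unfolding f_def by (cases "?g c") simp_all
  qed
  have incl: "f c \<in> cluster tw c" if "c\<in>Q" for c by (rule g1[OF some[OF that]])
  have injQ: "inj_on f Q"
  proof (rule inj_onI)
    fix c d assume a: "c \<in> Q" "d \<in> Q" "f c = f d"
    have "?g d = Some (f c)" using some[OF a(2)] a(3) by simp
    then show "c = d" by (rule g2[OF some[OF a(1)]])
  qed
  have clu: "f ` cluster tw c = cluster tw c" if c: "c\<in>Q" for c
  proof -
    have "f ` cluster tw c \<subseteq> cluster tw c"
    proof
      fix y assume "y \<in> f ` cluster tw c"
      then obtain d where d: "d \<in> cluster tw c" "y = f d" by blast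
      then have "d \<in> Q" using clQ[OF c] by blast
      then have "f d \<in> cluster tw d" by (rule incl)
      then show "y \<in> cluster tw c" using cluster_trans[OF _ d(1)] d(2) by simp
    qed
    moreover have "inj_on f (cluster tw c)" by (rule inj_on_subset[OF injQ clQ[OF c]])
    ultimately show ?thesis using endo_inj_surj[OF fin[OF c]] by simp
  qed
  have "f ` Q = Q"
  proof
    show "f ` Q \<subseteq> Q"
    proof
      fix y assume "y \<in> f ` Q"
      then obtain c where c: "c \<in> Q" "y = f c" by blast
      show "y \<in> Q" using incl[OF c(1)] clQ[OF c(1)] c(2) by blast
    qed
    show "Q \<subseteq> f ` Q"
    proof
      fix d assume d: "d\<in>Q"
      have "d \<in> f ` cluster tw d" unfolding clu[OF d] by (rule cluster.base)
      then show "d \<in> f ` Q" using clQ[OF d] by blast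
    qed
  qed
  then have "bij_betw f Q Q" using injQ by (simp add: bij_betw_def)
  then show ?thesis unfolding conclusion_def Let_def
    using clu unfolding f_def by simp
qed

lemma cneg_cneg[simp]: "cneg (cneg a) = a" by (cases a) auto
lemma is_inf_cneg[simp]: "is_inf (cneg a) = is_inf a" by (cases a) (auto simp: is_inf_def)

lemma funpow_closed:
  assumes "\<And>d. d \<in> S \<Longrightarrow> f d \<in> S" "d \<in> S"
  shows "(f ^^ n) d \<in> S"
  using assms by (induction n) auto

lemma cluster_sub:
  assumes cl: "\<And>t d. d \<in> S \<Longrightarrow> tw t d \<in> S" and c: "c \<in> S"
  shows "cluster tw c \<subseteq> S"
proof
  fix d assume "d \<in> cluster tw c"
  then show "d \<in> S"
  proof (induction rule: cluster.induct)
    case base then show ?case using c .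
  next
    case (fwd d t) then show ?case using cl by blast
  next
    case (bwd d t) then show ?case using funpow_closed[of S "tw t"] cl by blast
  qed
qed

lemma UNIV_axis: "(UNIV :: axis set) = {AX, AY, AZ}"
  using axis.exhaust by blast

lemma finite_axis[simp]: "finite (UNIV :: axis set)"
  by (simp add: UNIV_axis)

lemma twist_pt_inv: "(twist_pt t ^^ 3) (twist_pt t p) = p"
proof -
  obtain a al where t: "t = (a, al)" by fastforce
  obtain x y z where p: "p = (x, y, z)" by (cases p) auto
  show ?thesis unfolding t p by (cases a) (simp_all add: twist_pt_def numeral_eq_Suc)
qed

lemma twist_ed_inv: "(twist_ed t ^^ 3) (twist_ed t c) = c"
proof -
  obtain a al where t: "t = (a, al)" by fastforce
  obtain x y z i where p: "c = ((x, y, z), i)" by (cases c) auto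
  show ?thesis unfolding t p by (cases a; cases i) (simp_all add: twist_ed_def numeral_eq_Suc)
qed

lemma inj_twist_pt: "inj (twist_pt t)"
  by (rule inj_on_inverseI[where g = "twist_pt t ^^ 3"]) (rule twist_pt_inv)

lemma inj_twist_ed: "inj (twist_ed t)"
  by (rule inj_on_inverseI[where g = "twist_ed t ^^ 3"]) (rule twist_ed_inv)

lemma card_axis_1:
  "card {i::axis. P i} = 1 \<longleftrightarrow>
    (P AX \<and> \<not> P AY \<and> \<not> P AZ) \<or> (\<not> P AX \<and> P AY \<and> \<not> P AZ) \<or> (\<not> P AX \<and> \<not> P AY \<and> P AZ)"
proof -
  have e: "{i::axis. P i} = (if P AX then {AX} else {}) \<union> (if P AY then {AY} else {}) \<union> (if P AZ then {AZ} else {})"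
    by (rule set_eqI, case_tac x) auto
  show ?thesis unfolding e by (cases "P AX"; cases "P AY"; cases "P AZ") (simp_all add: card_insert_if)
qed

lemma Q_edgeless_iff: "(x, y, z) \<in> Q_edgeless \<longleftrightarrow>
    (is_inf x \<and> \<not> is_inf y \<and> \<not> is_inf z) \<or> (\<not> is_inf x \<and> is_inf y \<and> \<not> is_inf z)
    \<or> (\<not> is_inf x \<and> \<not> is_inf y \<and> is_inf z)"
  unfolding Q_edgeless_def mem_Collect_eq card_axis_1 by simp

lemma twist_pt_Q: "p \<in> Q_edgeless \<Longrightarrow> twist_pt t p \<in> Q_edgeless"
proof -
  assume h: "p \<in> Q_edgeless"
  obtain a al where t: "t = (a, al)" by fastforce
  obtain x y z where p: "p = (x, y, z)" by (cases p) auto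
  show ?thesis using h unfolding t p
    by (cases a) (auto simp add: twist_pt_def Q_edgeless_iff)
qed

lemma twist_ed_Q: "c \<in> Q_edged \<Longrightarrow> twist_ed t c \<in> Q_edged"
proof -
  assume h: "c \<in> Q_edged"
  obtain a al where t: "t = (a, al)" by fastforce
  obtain x y z i where p: "c = ((x, y, z), i)" by (cases c) auto
  show ?thesis using h unfolding t p
    by (cases a; cases i) (auto simp add: twist_ed_def Q_edged_def)
qed

definition Aset :: "'l point \<Rightarrow> 'l crd set" where
  "Aset p = {fst p, fst (snd p), snd (snd p), cneg (fst p), cneg (fst (snd p)), cneg (snd (snd p))}"

lemma Aset_cneg: "u \<in> Aset p \<Longrightarrow> cneg u \<in> Aset p"
  unfolding Aset_def by auto

lemma finite_Aset: "finite (Aset p)" unfolding Aset_def by simp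

lemma twist_pt_A: "q \<in> Aset p \<times> Aset p \<times> Aset p \<Longrightarrow> twist_pt t q \<in> Aset p \<times> Aset p \<times> Aset p"
proof -
  assume h: "q \<in> Aset p \<times> Aset p \<times> Aset p"
  obtain a al where t: "t = (a, al)" by fastforce
  obtain x y z where q: "q = (x, y, z)" by (cases q) auto
  show ?thesis using h unfolding t q
    by (cases a) (auto simp add: twist_pt_def intro: Aset_cneg)
qed

lemma twist_ed_A: "q \<in> (Aset p \<times> Aset p \<times> Aset p) \<times> UNIV \<Longrightarrow> twist_ed t q \<in> (Aset p \<times> Aset p \<times> Aset p) \<times> UNIV"
proof -
  assume h: "q \<in> (Aset p \<times> Aset p \<times> Aset p) \<times> UNIV"
  obtain a al where t: "t = (a, al)" by fastforce
  obtain x y z i where q: "q = ((x, y, z), i)" by (cases q) auto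
  show ?thesis using h unfolding t q
    by (cases a) (auto simp add: twist_ed_def intro: Aset_cneg)
qed

lemma fin_pt: "finite (cluster twist_pt p)"
proof (rule finite_subset)
  show "cluster twist_pt p \<subseteq> Aset p \<times> Aset p \<times> Aset p"
  proof (rule cluster_sub)
    show "p \<in> Aset p \<times> Aset p \<times> Aset p" by (cases p) (simp add: Aset_def)
  qed (rule twist_pt_A)
  show "finite (Aset p \<times> Aset p \<times> Aset p)" by (simp add: finite_Aset)
qed

lemma fin_ed: "finite (cluster twist_ed c)"
proof (rule finite_subset)
  show "cluster twist_ed c \<subseteq> (Aset (fst c) \<times> Aset (fst c) \<times> Aset (fst c)) \<times> UNIV"
  proof (rule cluster_sub)
    show "c \<in> (Aset (fst c) \<times> Aset (fst c) \<times> Aset (fst c)) \<times> UNIV"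
      by (cases c; cases "fst c") (simp add: Aset_def)
  qed (rule twist_ed_A)
  show "finite ((Aset (fst c) \<times> Aset (fst c) \<times> Aset (fst c)) \<times> (UNIV :: axis set))"
    by (simp add: finite_Aset)
qed

theorem mainTheorem19:
  fixes \<sigma> :: "'o::wellorder \<Rightarrow> 'l basic_twist" and \<theta> :: 'o
  assumes "infinite (UNIV :: 'l set)"
    and "basic_seq \<sigma> \<theta>"
  shows "(univ_convergent (Q_edgeless :: 'l point set) twist_pt \<sigma> \<theta>
            \<longrightarrow> conclusion (Q_edgeless :: 'l point set) twist_pt \<sigma> \<theta>)
       \<and> (univ_convergent (Q_edged :: ('l point \<times> axis) set) twist_ed \<sigma> \<theta>
            \<longrightarrow> conclusion (Q_edged :: ('l point \<times> axis) set) twist_ed \<sigma> \<theta>)"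
proof (intro conjI impI)
  assume "univ_convergent (Q_edgeless :: 'l point set) twist_pt \<sigma> \<theta>"
  then show "conclusion (Q_edgeless :: 'l point set) twist_pt \<sigma> \<theta>"
  proof (rule generic[rotated 3])
    show "inj (twist_pt t)" for t by (rule inj_twist_pt)
    show "finite (cluster twist_pt c)" for c :: "'l point" by (rule fin_pt)
    show "cluster twist_pt c \<subseteq> Q_edgeless" if "c \<in> Q_edgeless" for c :: "'l point"
      by (rule cluster_sub[OF twist_pt_Q that])
  qed
next
  assume "univ_convergent (Q_edged :: ('l point \<times> axis) set) twist_ed \<sigma> \<theta>"
  then show "conclusion (Q_edged :: ('l point \<times> axis) set) twist_ed \<sigma> \<theta>"
  proof (rule generic[rotated 3])
    show "inj (twist_ed t)" for t by (rule inj_twist_ed)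
    show "finite (cluster twist_ed c)" for c :: "'l point \<times> axis" by (rule fin_ed)
    show "cluster twist_ed c \<subseteq> Q_edged" if "c \<in> Q_edged" for c :: "'l point \<times> axis"
      by (rule cluster_sub[OF twist_ed_Q that])
  qed
qed

end
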